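(* Let $X$ be a topological space and let $r:X\to A$ be a retraction onto a subspace $A\subseteq X$. Let $m\in A$ and $l\in X$. Then: (a) If the man has a strategy in $A$ for starting points $m$ (man) and $r(l)$ (lion), then the man has a strategy in $X$ for starting points $m$ (man) and $l$ (lion). (b) If the lion has a strategy in $X$ for starting points $m$ (man) and $l$ (lion), then the lion has a strategy in $A$ for starting points $m$ (man) and $r(l)$ (lion).
   Context: For a topological space $X$ and $x\in X$, let $P_x(X)$ be the set of continuous maps $\gamma:[0,+\infty)\to X$ with $\gamma(0)=x$. For $\gamma\in P_x(X)$ and $t\ge 0$, write $\gamma_{<t}=\gamma|_{[0,t)}$ and $\gamma_{\le t}=\gamma|_{[0,t]}$. Given starting points $m$ (man) and $l$ (lion) in a space $X$: a strategy for the man is a function $S:P_l(X)\to P_m(X)$ such that (i) $S(\beta)(t)\neq\beta(t)$ for all $\beta\in P_l(X)$ and $t\ge0$, and (ii) whenever $\beta,\beta'\in P_l(X)$ and $t\ge0$ satisfy $\beta_{<t}=\beta'_{<t}$, then $S(\beta)_{\le t}=S(\beta')_{\le t}$. A strategy for the lion is a function $S:P_m(X)\to P_l(X)$ such that (i) for each $\alpha\in P_m(X)$ there exists $t\ge 0$ with $S(\alpha)(t)=\alpha(t)$, and (ii) whenever $\alpha,\alpha'\in P_m(X)$ and $t\ge0$ satisfy $\alpha_{<t}=\alpha'_{<t}$, then $S(\alpha)_{\le t}=S(\alpha')_{\le t}$. A retraction $r:X\to A$ is a continuous map with $r(a)=a$ for all $a\in A$. *)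

theory Defs
  imports "HOL-Analysis.Analysis"
begin

text \<open>Paths starting at x: continuous maps [0,+oo) to X with value x at 0.
  Paths are HOL functions real => 'a; only their values on [0,+oo) matter.\<close>
definition paths_from :: "'a topology \<Rightarrow> 'a \<Rightarrow> (real \<Rightarrow> 'a) set" where
  "paths_from X x = {\<gamma>. continuous_map (top_of_set {0..}) X \<gamma> \<and> \<gamma> 0 = x}"

definition man_strategy ::
  "'a topology \<Rightarrow> 'a \<Rightarrow> 'a \<Rightarrow> ((real \<Rightarrow> 'a) \<Rightarrow> (real \<Rightarrow> 'a)) \<Rightarrow> bool" where
  "man_strategy X m l S \<longleftrightarrow>
     (\<forall>\<beta>\<in>paths_from X l. S \<beta> \<in> paths_from X m \<and> (\<forall>t\<ge>0. S \<beta> t \<noteq> \<beta> t)) \<and>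
     (\<forall>\<beta>\<in>paths_from X l. \<forall>\<beta>'\<in>paths_from X l. \<forall>t\<ge>0.
        (\<forall>s\<in>{0..<t}. \<beta> s = \<beta>' s) \<longrightarrow> (\<forall>s\<in>{0..t}. S \<beta> s = S \<beta>' s))"

definition lion_strategy ::
  "'a topology \<Rightarrow> 'a \<Rightarrow> 'a \<Rightarrow> ((real \<Rightarrow> 'a) \<Rightarrow> (real \<Rightarrow> 'a)) \<Rightarrow> bool" where
  "lion_strategy X m l S \<longleftrightarrow>
     (\<forall>\<alpha>\<in>paths_from X m. S \<alpha> \<in> paths_from X l \<and> (\<exists>t\<ge>0. S \<alpha> t = \<alpha> t)) \<and>
     (\<forall>\<alpha>\<in>paths_from X m. \<forall>\<alpha>'\<in>paths_from X m. \<forall>t\<ge>0.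
        (\<forall>s\<in>{0..<t}. \<alpha> s = \<alpha>' s) \<longrightarrow> (\<forall>s\<in>{0..t}. S \<alpha> s = S \<alpha>' s))"

definition man_has_strategy :: "'a topology \<Rightarrow> 'a \<Rightarrow> 'a \<Rightarrow> bool" where
  "man_has_strategy X m l \<longleftrightarrow> (\<exists>S. man_strategy X m l S)"

definition lion_has_strategy :: "'a topology \<Rightarrow> 'a \<Rightarrow> 'a \<Rightarrow> bool" where
  "lion_has_strategy X m l \<longleftrightarrow> (\<exists>S. lion_strategy X m l S)"

end

theory Submission
  imports Defs
begin
lemma sub_path:
  assumes "\<gamma> \<in> paths_from (subtopology X A) x"
  shows "\<gamma> \<in> paths_from X x" "\<And>t. t \<ge> 0 \<Longrightarrow> \<gamma> t \<in> A"
  using assms unfolding paths_from_def continuous_map_in_subtopology by auto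
lemma rb: assumes "continuous_map X (subtopology X A) r" "\<beta> \<in> paths_from X l"
 shows "r \<circ> \<beta> \<in> paths_from (subtopology X A) (r l)"
  using assms unfolding paths_from_def by (auto intro: continuous_map_compose)

theorem mainTheorem6:
  fixes X :: "'a topology" and A :: "'a set" and r :: "'a \<Rightarrow> 'a" and m l :: 'a
  assumes "A \<subseteq> topspace X"
    and "continuous_map X (subtopology X A) r"
    and "\<forall>a\<in>A. r a = a"
    and "m \<in> A" and "l \<in> topspace X"
  shows "(man_has_strategy (subtopology X A) m (r l) \<longrightarrow> man_has_strategy X m l) \<and>
         (lion_has_strategy X m l \<longrightarrow> lion_has_strategy (subtopology X A) m (r l))"
proof (intro conjI impI)
  assume "man_has_strategy (subtopology X A) m (r l)"
  then obtain S where S: "man_strategy (subtopology X A) m (r l) S"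
    unfolding man_has_strategy_def by blast
  have S1: "\<And>\<beta>. \<beta>\<in>paths_from (subtopology X A) (r l) \<Longrightarrow> S \<beta> \<in> paths_from (subtopology X A) m \<and> (\<forall>t\<ge>0. S \<beta> t \<noteq> \<beta> t)"
    using S unfolding man_strategy_def by blast
  have S2: "\<And>\<beta> \<beta>' t s. \<beta>\<in>paths_from (subtopology X A) (r l) \<Longrightarrow> \<beta>'\<in>paths_from (subtopology X A) (r l) \<Longrightarrow> t \<ge> 0 \<Longrightarrow>
        (\<forall>s\<in>{0..<t}. \<beta> s = \<beta>' s) \<Longrightarrow> s\<in>{0..t} \<Longrightarrow> S \<beta> s = S \<beta>' s"
    using S unfolding man_strategy_def by blast
  have "man_strategy X m l (\<lambda>\<beta>. S (r \<circ> \<beta>))"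
    unfolding man_strategy_def
  proof (intro conjI ballI allI impI)
    fix \<beta> assume b: "\<beta> \<in> paths_from X l"
    have rb': "r \<circ> \<beta> \<in> paths_from (subtopology X A) (r l)" using rb[OF assms(2) b] .
    have s: "S (r \<circ> \<beta>) \<in> paths_from (subtopology X A) m"
      using S1[OF rb'] by blast
    have ne: "\<And>t. t \<ge> 0 \<Longrightarrow> S (r \<circ> \<beta>) t \<noteq> r (\<beta> t)"
      using S1[OF rb'] by simp
    show "S (r \<circ> \<beta>) \<in> paths_from X m" using sub_path(1)[OF s] .
    fix t :: real assume t: "t \<ge> 0"
    show "S (r \<circ> \<beta>) t \<noteq> \<beta> t"
    proof
      assume e: "S (r \<circ> \<beta>) t = \<beta> t"
      have bA: "\<beta> t \<in> A" using sub_path(2)[OF s t] e by simp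
      have "r (\<beta> t) = \<beta> t" using bA assms(3) by blast
      then show False using ne[OF t] e by simp
    qed
  next
    fix \<beta> \<beta>' t s assume b: "\<beta> \<in> paths_from X l" and b': "\<beta>' \<in> paths_from X l"
      and t: "0 \<le> t" and eq: "\<forall>s\<in>{0..<t}. \<beta> s = \<beta>' s" and s: "s \<in> {0..t}"
    have "\<forall>s\<in>{0..<t}. (r \<circ> \<beta>) s = (r \<circ> \<beta>') s" using eq by simp
    then show "S (r \<circ> \<beta>) s = S (r \<circ> \<beta>') s"
      by (rule S2[OF rb[OF assms(2) b] rb[OF assms(2) b'] t _ s])
  qed
  then show "man_has_strategy X m l" unfolding man_has_strategy_def by blast
next
  assume "lion_has_strategy X m l"
  then obtain T where T: "lion_strategy X m l T"
    unfolding lion_has_strategy_def by blast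
  have T1: "\<And>\<alpha>. \<alpha>\<in>paths_from X m \<Longrightarrow> T \<alpha> \<in> paths_from X l \<and> (\<exists>t\<ge>0. T \<alpha> t = \<alpha> t)"
    using T unfolding lion_strategy_def by blast
  have T2: "\<And>\<alpha> \<alpha>' t s. \<alpha>\<in>paths_from X m \<Longrightarrow> \<alpha>'\<in>paths_from X m \<Longrightarrow> t \<ge> 0 \<Longrightarrow>
        (\<forall>s\<in>{0..<t}. \<alpha> s = \<alpha>' s) \<Longrightarrow> s\<in>{0..t} \<Longrightarrow> T \<alpha> s = T \<alpha>' s"
    using T unfolding lion_strategy_def by blast
  have "lion_strategy (subtopology X A) m (r l) (\<lambda>\<alpha>. r \<circ> T \<alpha>)"
    unfolding lion_strategy_def
  proof (intro conjI ballI allI impI)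
    fix \<alpha> assume a: "\<alpha> \<in> paths_from (subtopology X A) m"
    have a1: "\<alpha> \<in> paths_from X m" using sub_path(1)[OF a] .
    have Ta: "T \<alpha> \<in> paths_from X l" and ex: "\<exists>t\<ge>0. T \<alpha> t = \<alpha> t"
      using T1[OF a1] by auto
    show "r \<circ> T \<alpha> \<in> paths_from (subtopology X A) (r l)"
      using rb[OF assms(2) Ta] .
    from ex obtain t where t: "t \<ge> 0" "T \<alpha> t = \<alpha> t" by blast
    have "\<alpha> t \<in> A" using sub_path(2)[OF a t(1)] .
    then have "(r \<circ> T \<alpha>) t = \<alpha> t" using t assms(3) by simp
    then show "\<exists>t\<ge>0. (r \<circ> T \<alpha>) t = \<alpha> t" using t(1) by blast
  next
    fix \<alpha> \<alpha>' t s assume a: "\<alpha> \<in> paths_from (subtopology X A) m"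
      and a': "\<alpha>' \<in> paths_from (subtopology X A) m"
      and t: "0 \<le> t" and eq: "\<forall>s\<in>{0..<t}. \<alpha> s = \<alpha>' s" and s: "s \<in> {0..t}"
    have "T \<alpha> s = T \<alpha>' s"
      by (rule T2[OF sub_path(1)[OF a] sub_path(1)[OF a'] t eq s])
    then show "(r \<circ> T \<alpha>) s = (r \<circ> T \<alpha>') s" by simp
  qed
  then show "lion_has_strategy (subtopology X A) m (r l)"
    unfolding lion_has_strategy_def by blast
qed
end
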